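(* Let $G(n,n_1,n_2,n_3,p_1,p_2,p_3)$ be a three-layer stochastic block model network satisfying the standing assumptions below. Fix any one of the three layers as target layer, and apply ReduceWeight to all communities of the other two layers. Then the (expected, weighted) modularity of the target layer's partition in the resulting weighted graph is strictly larger than in the original graph.
   Context: Multi-layer stochastic block model $G(n,n_1,\dots,n_L,p_1,\dots,p_L)$: a random graph on $n$ nodes with $L$ layers. For each layer $l$ the nodes are partitioned into $n_l$ planted communities of size $s_l=n/n_l$; independently for each layer, each pair of distinct nodes in a common community of layer $l$ receives an edge from layer $l$ with probability $p_l$; the graph is the simple union of all generated edges. The partitions of different layers are independent: for any $k\ge2$ distinct layers and one community from each, their intersection has $n/(n_{l_1}\cdots n_{l_k})$ nodes (in expectation). Standing assumptions: $n_l\ge4$, $p_l\in[0.05,1]$ for every layer, and $n\ge2\prod_l n_l$. Retention probability of a layer $l$: for a community $i$ of layer $l$ with size $s_l$, $e^i_{ll}$ internal edges and $e^i_{lout}$ outgoing edges, $\widehat{p^i_l}=e^i_{ll}/(\tfrac12 s_l(s_l-1))$, $\widehat{q^i_l}=e^i_{lout}/(s_l(n-s_l))$, $q^i_l=\widehat{q^i_l}/\widehat{p^i_l}$ (computed from expected counts, giving a common value $q_l$ for the layer). ReduceWeight on layer $l$: viewing the graph as weighted, multiply the weight of every internal edge of every community of layer $l$ by $q_l$ (so an edge internal to communities of both reduced layers $a,b$ has its weight multiplied by $q_aq_b$). Weighted modularity of a layer: as $Q_l=\sum_i\big(\frac{e^i_{ll}}{e}-(\frac{d^i_l}{2e})^2\big)$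 with $d^i_l=2e^i_{ll}+e^i_{lout}$, where $e^i_{ll}$, $e^i_{lout}$, $e$ are the (expected) sums of edge weights of internal edges, outgoing edges and all edges. *)

theory Defs
  imports Complex_Main
begin

text \<open>Layers are indexed by the finite
set Ls (here {..<3}); nc l is the number of communities n_l of layer l; p l is p_l.
A pair of distinct nodes has "type" T = the set of layers in which the two nodes lie
in a common community. All counts are the paper's expected counts (real numbers).\<close>

text \<open>Expected number of other nodes sharing a given node's community in every layer of S
(the intersection of its communities has n / prod n_l nodes, minus the node itself).\<close>
definition share_atleast :: "nat \<Rightarrow> (nat \<Rightarrow> nat) \<Rightarrow> nat set \<Rightarrow> real" where
  "share_atleast n nc S = real n / (\<Prod>l\<in>S. real (nc l)) - 1"

text \<open>Expected number of other nodes whose pair with a given node has type exactly T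
(inclusion-exclusion).\<close>
definition share_exact :: "nat set \<Rightarrow> nat \<Rightarrow> (nat \<Rightarrow> nat) \<Rightarrow> nat set \<Rightarrow> real" where
  "share_exact Ls n nc T =
     (\<Sum>S\<in>{S. T \<subseteq> S \<and> S \<subseteq> Ls}. (-1) ^ card (S - T) * share_atleast n nc S)"

definition edge_prob :: "(nat \<Rightarrow> real) \<Rightarrow> nat set \<Rightarrow> real" where
  "edge_prob p T = 1 - (\<Prod>l\<in>T. 1 - p l)"

text \<open>w T is the weight given to an edge whose pair has type T.
Expected internal edge weight e^i_ll of a community i of layer t (size s_t = n/n_t).\<close>
definition internal_weight ::
  "nat set \<Rightarrow> nat \<Rightarrow> (nat \<Rightarrow> nat) \<Rightarrow> (nat \<Rightarrow> real) \<Rightarrow> (nat set \<Rightarrow> real) \<Rightarrow> nat \<Rightarrow> real" where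
  "internal_weight Ls n nc p w t =
     real n / real (nc t) / 2 *
       (\<Sum>T\<in>{T. T \<subseteq> Ls \<and> t \<in> T}. share_exact Ls n nc T * edge_prob p T * w T)"

definition outgoing_weight ::
  "nat set \<Rightarrow> nat \<Rightarrow> (nat \<Rightarrow> nat) \<Rightarrow> (nat \<Rightarrow> real) \<Rightarrow> (nat set \<Rightarrow> real) \<Rightarrow> nat \<Rightarrow> real" where
  "outgoing_weight Ls n nc p w t =
     real n / real (nc t) *
       (\<Sum>T\<in>{T. T \<subseteq> Ls \<and> t \<notin> T}. share_exact Ls n nc T * edge_prob p T * w T)"

definition total_weight ::
  "nat set \<Rightarrow> nat \<Rightarrow> (nat \<Rightarrow> nat) \<Rightarrow> (nat \<Rightarrow> real) \<Rightarrow> (nat set \<Rightarrow> real) \<Rightarrow> real" where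
  "total_weight Ls n nc p w =
     real n / 2 * (\<Sum>T\<in>Pow Ls. share_exact Ls n nc T * edge_prob p T * w T)"

text \<open>Weighted modularity Q_t of the partition of layer t (sum over its n_t communities,
which all have the same expected counts).\<close>
definition layer_modularity ::
  "nat set \<Rightarrow> nat \<Rightarrow> (nat \<Rightarrow> nat) \<Rightarrow> (nat \<Rightarrow> real) \<Rightarrow> (nat set \<Rightarrow> real) \<Rightarrow> nat \<Rightarrow> real" where
  "layer_modularity Ls n nc p w t =
     (\<Sum>i<nc t.
        internal_weight Ls n nc p w t / total_weight Ls n nc p w
        - ((2 * internal_weight Ls n nc p w t + outgoing_weight Ls n nc p w t)
             / (2 * total_weight Ls n nc p w))\<^sup>2)"

definition retention :: "nat set \<Rightarrow> nat \<Rightarrow> (nat \<Rightarrow> nat) \<Rightarrow> (nat \<Rightarrow> real) \<Rightarrow> nat \<Rightarrow> real" where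
  "retention Ls n nc p l =
     (let s = real n / real (nc l);
          phat = internal_weight Ls n nc p (\<lambda>_. 1) l / (s * (s - 1) / 2);
          qhat = outgoing_weight Ls n nc p (\<lambda>_. 1) l / (s * (real n - s))
      in qhat / phat)"

text \<open>Edge weights after ReduceWeight on every layer in R: an edge of pair type T is
multiplied by q_l for each reduced layer l in which it is internal.\<close>
definition reduced_weight ::
  "nat set \<Rightarrow> nat \<Rightarrow> (nat \<Rightarrow> nat) \<Rightarrow> (nat \<Rightarrow> real) \<Rightarrow> nat set \<Rightarrow> nat set \<Rightarrow> real" where
  "reduced_weight Ls n nc p R T = (\<Prod>l\<in>T \<inter> R. retention Ls n nc p l)"

end

theory Submission
  imports Defs
begin


lemma core_g:
  fixes pm pk qm qk emk :: real
  assumes "0 < pm" "pm \<le> 1" "0 < pk" "pk \<le> 1" "0 \<le> qm" "qm < 1" "0 \<le> qk" "qk < 1"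
    and "emk \<ge> pm" "emk \<ge> pk" "0 \<le> cm" "0 < ck"  "0 \<le> dm" "0 < dk"
  shows "dm * pm * (1-qm) + dk * pk * (1-qk) + emk * (1 - qm*qk) + (qm-qk)*(pk-pm) > 0"
proof -
  have a: "dm * pm * (1-qm) \<ge> 0" using assms by simp
  have b: "dk * pk * (1-qk) > 0" using assms by simp
  have q1: "qm*qk \<le> qm" "qm*qk \<le> qk" using assms by (simp_all add: mult_left_le mult_left_le_one_le)
  have e1: "emk * (1 - qm*qk) \<ge> pk * (1 - qm*qk)" using assms q1
    by (intro mult_right_mono) auto
  have e2: "emk * (1 - qm*qk) \<ge> pm * (1 - qm*qk)" using assms q1
    by (intro mult_right_mono) auto
  have f1: "pk * (1 - qm*qk) \<ge> 0" "pm * (1 - qm*qk) \<ge> 0" using assms q1 by simp_all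
  show ?thesis
  proof (cases "(qm-qk)*(pk-pm) \<ge> 0")
    case True then show ?thesis using a b e1 f1 by linarith
  next
    case False
    show ?thesis
    proof (cases "pk \<ge> pm")
      case True
      have "qk > qm"
      proof (rule ccontr)
        assume "\<not> qk > qm"
        then have "(qm-qk)*(pk-pm) \<ge> 0" using True by (intro mult_nonneg_nonneg) auto
        then show False using False by simp
      qed
      have "pk * (1 - qm*qk) \<ge> pk*(1-qm)" using q1 assms by (intro mult_left_mono) auto
      moreover have "(qk-qm)*(pk-pm) \<le> (qk-qm)*pk" using assms \<open>qk>qm\<close> by (intro mult_left_mono) auto
      moreover have "(qm-qk)*(pk-pm) = - ((qk-qm)*(pk-pm))" by (simp add: algebra_simps)
      moreover have "(qk-qm)*pk = pk*qk - pk*qm" "pk*(1-qm) = pk - pk*qm" by (simp_all add: algebra_simps)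
      moreover have "pk*(1-qk) \<ge> 0" using assms by simp
      moreover have "pk*(1-qk) = pk - pk*qk" by (simp add: algebra_simps)
      ultimately show ?thesis using a b e1 by (smt (verit))
    next
      case F2: False
      have "qm > qk"
      proof (rule ccontr)
        assume "\<not> qm > qk"
        then have "(qm-qk)*(pk-pm) \<ge> 0" using F2 by (intro mult_nonpos_nonpos) auto
        then show False using False by simp
      qed
      have "pm * (1 - qm*qk) \<ge> pm*(1-qk)" using q1 assms by (intro mult_left_mono) auto
      moreover have "(qm-qk)*(pm-pk) \<le> (qm-qk)*pm" using assms \<open>qm>qk\<close> by (intro mult_left_mono) auto
      moreover have "(qm-qk)*(pk-pm) = - ((qm-qk)*(pm-pk))" by (simp add: algebra_simps)
      moreover have "(qm-qk)*pm = pm*qm - pm*qk" "pm*(1-qk) = pm - pm*qk" by (simp_all add: algebra_simps)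
      moreover have "pm*(1-qm) \<ge> 0" using assms by simp
      moreover have "pm*(1-qm) = pm - pm*qm" by (simp add: algebra_simps)
      ultimately show ?thesis using a b e2 by (smt (verit))
    qed
  qed
qed


lemma core_main:
  fixes N c a b pt pm pk qm qk :: real
  assumes c: "0 < c" "c < 1" and a: "0 < a" "a < 1" and b: "0 < b" "b < 1"
    and p: "0 < pt" "pt \<le> 1" "0 < pm" "pm \<le> 1" "0 < pk" "pk \<le> 1"
    and q: "0 \<le> qm" "qm < 1" "0 \<le> qk" "qk < 1"
    and N: "N * c * a * b \<ge> 1"
  defines "emk \<equiv> 1 - (1-pm)*(1-pk)" and "etm \<equiv> 1 - (1-pt)*(1-pm)"
    and "etk \<equiv> 1 - (1-pt)*(1-pk)" and "etmk \<equiv> 1 - (1-pt)*(1-pm)*(1-pk)"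
  defines "xt \<equiv> N*c*(1-a)*(1-b)*pt" and "xm \<equiv> N*(1-c)*a*(1-b)*pm"
    and "xk \<equiv> N*(1-c)*(1-a)*b*pk" and "xmk \<equiv> N*(1-c)*a*b*emk"
    and "xtm \<equiv> N*c*a*(1-b)*etm" and "xtk \<equiv> N*c*(1-a)*b*etk"
    and "xtmk \<equiv> (N*c*a*b - 1)*etmk"
  shows "(xt + xtm*qm + xtk*qk + xtmk*(qm*qk)) * (xm + xk + xmk)
       > (xt + xtm + xtk + xtmk) * (xm*qm + xk*qk + xmk*(qm*qk))"
proof -
  have Npos: "N > 0" using N c a b
    by (smt (verit) mult_nonneg_nonneg mult_nonpos_nonneg mult_pos_pos)
  define K where "K = N*N*c*(1-c)*a*b*(1-a)*(1-b)*pt"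
  have Kpos: "K > 0" unfolding K_def using Npos c a b p by simp
  have id: "(xt + xtm*qm + xtk*qk + xtmk*(qm*qk)) * (xm + xk + xmk)
       - (xt + xtm + xtk + xtmk) * (xm*qm + xk*qk + xmk*(qm*qk))
     = xt*xm*(1-qm) + xt*xk*(1-qk) + xt*xmk*(1-qm*qk)
       + qm*(1-qk)*(xtm*xmk - xtmk*xm) + qk*(1-qm)*(xtk*xmk - xtmk*xk)
       + (qm-qk)*(xtm*xk - xtk*xm)"
    by (simp add: algebra_simps)
  have etmk0: "etmk \<ge> 0" unfolding etmk_def using p
    by (simp add: mult_le_one)
  have xm0: "xm \<ge> 0" "xk \<ge> 0" unfolding xm_def xk_def using Npos c a b p by auto
  have T4: "xtm*xmk - xtmk*xm \<ge> 0"
  proof -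
    have "xtmk*xm \<le> (N*c*a*b)*etmk*xm" unfolding xtmk_def
      using etmk0 xm0 by (intro mult_right_mono) (auto simp: algebra_simps)
    moreover have "xtm*xmk - (N*c*a*b)*etmk*xm = N*N*c*(1-c)*a*a*b*(1-b)*((1-pm)*pt*pk)"
      unfolding xtm_def xmk_def xm_def etm_def emk_def etmk_def by (simp add: algebra_simps)
    moreover have "N*N*c*(1-c)*a*a*b*(1-b)*((1-pm)*pt*pk) \<ge> 0"
      using Npos c a b p by simp
    ultimately show ?thesis by linarith
  qed
  have T5: "xtk*xmk - xtmk*xk \<ge> 0"
  proof -
    have "xtmk*xk \<le> (N*c*a*b)*etmk*xk" unfolding xtmk_def
      using etmk0 xm0 by (intro mult_right_mono) (auto simp: algebra_simps)
    moreover have "xtk*xmk - (N*c*a*b)*etmk*xk = N*N*c*(1-c)*a*b*b*(1-a)*((1-pk)*pt*pm)"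
      unfolding xtk_def xmk_def xk_def etk_def emk_def etmk_def by (simp add: algebra_simps)
    moreover have "N*N*c*(1-c)*a*b*b*(1-a)*((1-pk)*pt*pm) \<ge> 0"
      using Npos c a b p by simp
    ultimately show ?thesis by linarith
  qed
  have T1: "xt*xm*(1-qm) = K * (((1-b)/b) * pm * (1-qm))"
    unfolding K_def xt_def xm_def using b by (simp add: field_simps)
  have T2: "xt*xk*(1-qk) = K * (((1-a)/a) * pk * (1-qk))"
    unfolding K_def xt_def xk_def using a by (simp add: field_simps)
  have T3: "xt*xmk*(1-qm*qk) = K * (emk * (1-qm*qk))"
    unfolding K_def xt_def xmk_def by (simp add: algebra_simps)
  have T6: "(qm-qk)*(xtm*xk - xtk*xm) = K * ((qm-qk)*(pk-pm))"
    unfolding K_def xtm_def xk_def xtk_def xm_def etm_def etk_def by (simp add: algebra_simps)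
  have emk: "emk \<ge> pm" "emk \<ge> pk" unfolding emk_def using p
    by (simp_all add: algebra_simps mult_left_le_one_le mult_le_one)
  have g: "((1-b)/b) * pm * (1-qm) + ((1-a)/a) * pk * (1-qk) + emk * (1 - qm*qk) + (qm-qk)*(pk-pm) > 0"
    by (rule core_g[where cm=0 and ck=1]) (use p q emk a b in auto)
  have "K * (((1-b)/b) * pm * (1-qm) + ((1-a)/a) * pk * (1-qk) + emk * (1 - qm*qk) + (qm-qk)*(pk-pm)) > 0"
    using Kpos g by simp
  then have "xt*xm*(1-qm) + xt*xk*(1-qk) + xt*xmk*(1-qm*qk) + (qm-qk)*(xtm*xk - xtk*xm) > 0"
    unfolding T1 T2 T3 T6 by (simp add: algebra_simps)
  moreover have "qm*(1-qk)*(xtm*xmk - xtmk*xm) \<ge> 0" "qk*(1-qm)*(xtk*xmk - xtmk*xk) \<ge> 0"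
    using T4 T5 q by simp_all
  ultimately show ?thesis using id by linarith
qed


lemma sum_Pow_insert:
  assumes "finite A" "a \<notin> A"
  shows "(\<Sum>T\<in>Pow (insert a A). h T) = (\<Sum>T\<in>Pow A. h T) + (\<Sum>T\<in>Pow A. h (insert a T))"
proof -
  have "(\<Sum>T\<in>Pow (insert a A). h T) = (\<Sum>T\<in>Pow A. h T) + (\<Sum>T\<in>insert a ` Pow A. h T)"
    unfolding Pow_insert by (rule sum.union_disjoint) (use assms in auto)
  also have "(\<Sum>T\<in>insert a ` Pow A. h T) = (\<Sum>T\<in>Pow A. h (insert a T))"
    by (subst sum.reindex) (use assms in \<open>auto intro!: inj_onI simp: o_def\<close>)
  finally show ?thesis .
qed

lemma pow3:
  assumes "x \<noteq> y" "x \<noteq> z" "y \<noteq> z"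
  shows "(\<Sum>T\<in>Pow {x,y,z}. h T) = h {} + h {z} + h {y} + h {y,z} + h {x} + h {x,z} + h {x,y} + h {x,y,z}"
  using assms by (simp add: sum_Pow_insert add.assoc)

lemma filt:
  assumes "finite A"
  shows   "(\<Sum>T\<in>{T. T \<subseteq> A \<and> P T}. g T) = (\<Sum>T\<in>Pow A. if P T then g T else 0)"
proof -
  have "{T. T \<subseteq> A \<and> P T} = {T\<in>Pow A. P T}" by auto
  then show ?thesis by (simp only:) (rule sum.inter_filter, use assms in simp)
qed

lemma filt2:
  assumes "finite A"
  shows   "(\<Sum>T\<in>{T. P T \<and> T \<subseteq> A}. g T) = (\<Sum>T\<in>Pow A. if P T then g T else 0)"
proof -
  have "{T. P T \<and> T \<subseteq> A} = {T\<in>Pow A. P T}" by auto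
  then show ?thesis by (simp only:) (rule sum.inter_filter, use assms in simp)
qed

lemma SE1:
  assumes "x \<noteq> y" "x \<noteq> z" "y \<noteq> z" "nc x > 0" "nc y > 0" "nc z > 0"
  shows "share_exact {x,y,z} n nc {x} = real n * (1/nc x) * (1 - 1/nc y) * (1 - 1/nc z)"
  unfolding share_exact_def share_atleast_def filt2[OF finite_insert[THEN iffD2, OF finite_insert[THEN iffD2, OF finite.insertI[OF finite.emptyI]]]] pow3[OF assms(1-3)]
  using assms by (simp add: field_simps)

lemma SE2:
  assumes "x \<noteq> y" "x \<noteq> z" "y \<noteq> z" "nc x > 0" "nc y > 0" "nc z > 0"
  shows "share_exact {x,y,z} n nc {x,y} = real n * (1/nc x) * (1/nc y) * (1 - 1/nc z)"
  unfolding share_exact_def share_atleast_def filt2[OF finite_insert[THEN iffD2, OF finite_insert[THEN iffD2, OF finite.insertI[OF finite.emptyI]]]] pow3[OF assms(1-3)]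
  using assms by (simp add: field_simps)

lemma SE3:
  assumes "x \<noteq> y" "x \<noteq> z" "y \<noteq> z" "nc x > 0" "nc y > 0" "nc z > 0"
  shows "share_exact {x,y,z} n nc {x,y,z} = real n * (1/nc x) * (1/nc y) * (1/nc z) - 1"
  unfolding share_exact_def share_atleast_def filt2[OF finite_insert[THEN iffD2, OF finite_insert[THEN iffD2, OF finite.insertI[OF finite.emptyI]]]] pow3[OF assms(1-3)]
  using assms by (simp add: field_simps)

lemma sum_in:
  assumes "x \<noteq> y" "x \<noteq> z" "y \<noteq> z"
  shows "(\<Sum>T\<in>{T. T \<subseteq> {x,y,z} \<and> x \<in> T}. g T) = g {x} + g {x,z} + g {x,y} + g {x,y,z}"
  unfolding filt[of "{x,y,z}", simplified] pow3[OF assms] using assms by simp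

lemma sum_out:
  assumes "x \<noteq> y" "x \<noteq> z" "y \<noteq> z"
  shows "(\<Sum>T\<in>{T. T \<subseteq> {x,y,z} \<and> x \<notin> T}. g T) = g {} + g {z} + g {y} + g {y,z}"
  unfolding filt[of "{x,y,z}", simplified] pow3[OF assms] using assms by simp

lemma LM:
  fixes Ls :: "nat set" and n :: nat and nc :: "nat \<Rightarrow> nat" and p :: "nat \<Rightarrow> real" and w :: "nat set \<Rightarrow> real" and t :: nat
  defines "g \<equiv> \<lambda>T. share_exact Ls n nc T * edge_prob p T * w T"
  defines "B \<equiv> (\<Sum>T\<in>{T. T \<subseteq> Ls \<and> t \<in> T}. g T)" and "C \<equiv> (\<Sum>T\<in>{T. T \<subseteq> Ls \<and> t \<notin> T}. g T)"
  assumes "finite Ls" "nc t > 0" "n > 0" "B + C \<noteq> 0"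
  shows "layer_modularity Ls n nc p w t = B/(B+C) - 1/real (nc t)"
proof -
  have tot: "(\<Sum>T\<in>Pow Ls. g T) = B + C"
    unfolding B_def C_def filt[OF assms(4)] sum.distrib[symmetric] by (rule sum.cong) auto
  have I: "internal_weight Ls n nc p w t = real n / real (nc t) / 2 * B"
    unfolding internal_weight_def B_def g_def ..
  have O: "outgoing_weight Ls n nc p w t = real n / real (nc t) * C"
    unfolding outgoing_weight_def C_def g_def ..
  have E: "total_weight Ls n nc p w = real n / 2 * (B + C)"
    unfolding total_weight_def tot[unfolded g_def] ..
  have alg0: "a * ((N/a/2*B)/(N/2*S) - ((2*(N/a/2*B) + N/a*C)/(2*(N/2*S)))\<^sup>2) = B/S - 1/a"
    if "N > 0" "a > 0" "S \<noteq> 0" "B + C = S" for a N B C S :: real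
  proof -
    have e1: "2*(N/a/2*B) + N/a*C = (N/a)*S" "2*(N/2*S) = N*S" using that(4)[symmetric]
      by (simp_all add: algebra_simps add_divide_distrib)
    have "(2*(N/a/2*B) + N/a*C)/(2*(N/2*S)) = ((N/a)*S)/(N*S)" unfolding e1 ..
    also have "\<dots> = 1/a" using that by simp
    finally have F1: "(2*(N/a/2*B) + N/a*C)/(2*(N/2*S)) = 1/a" .
    have F2: "(N/a/2*B)/(N/2*S) = B/(a*S)" using that(1-3) by (simp add: field_simps)
    show ?thesis unfolding F1 F2 using that(1-3) by (simp add: field_simps power2_eq_square)
  qed
  have alg: "a * ((N/a/2*B)/(N/2*(B+C)) - ((2*(N/a/2*B) + N/a*C)/(2*(N/2*(B+C))))\<^sup>2) = B/(B+C) - 1/a"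
    if "N > 0" "a > 0" "B + C \<noteq> 0" for a N B C :: real
    using alg0[OF that refl] .
  have "layer_modularity Ls n nc p w t = real (nc t) * ((real n / real (nc t) / 2 * B)/(real n / 2 * (B + C))
     - ((2*(real n / real (nc t) / 2 * B) + real n / real (nc t) * C)/(2*(real n / 2 * (B + C))))\<^sup>2)"
    unfolding layer_modularity_def I O E by simp
  also have "\<dots> = B/(B+C) - 1/real (nc t)"
    by (rule alg) (use assms(5,6,7) in auto)
  finally show ?thesis .
qed



lemma core_q:
  fixes N ul ua ub pl pa pb :: real
  assumes u: "0 < ul" "ul \<le> 1/4" "0 < ua" "ua \<le> 1/4" "0 < ub" "ub \<le> 1/4"
    and p: "1/20 \<le> pl" "pl \<le> 1" "1/20 \<le> pa" "pa \<le> 1" "1/20 \<le> pb" "pb \<le> 1"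
    and N: "N*ul*ua*ub \<ge> 2"
  defines "ela \<equiv> 1 - (1-pl)*(1-pa)" and "elb \<equiv> 1 - (1-pl)*(1-pb)"
    and "eab \<equiv> 1 - (1-pa)*(1-pb)" and "elab \<equiv> 1 - (1-pl)*((1-pa)*(1-pb))"
  defines "In \<equiv> N*ul*(1-ua)*(1-ub)*pl + N*ul*ub*(1-ua)*elb + N*ul*ua*(1-ub)*ela + (N*ul*ua*ub - 1)*elab"
    and "Out \<equiv> N*ub*(1-ul)*(1-ua)*pb + N*ua*(1-ul)*(1-ub)*pa + N*ua*ub*(1-ul)*eab"
  defines "s \<equiv> N*ul"
  shows "0 \<le> (Out/(N-s))/(In/(s-1)) \<and> (Out/(N-s))/(In/(s-1)) < 1"
proof -
  have uu: "ua*ub \<le> 1/4*(1/4)" using mult_mono[of ua "1/4" ub "1/4"] u by simp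
  have sp: "s*(ua*ub) \<ge> 2" using N unfolding s_def by (simp add: mult.assoc)
  have uab: "ua*ub > 0" using u by simp
  have "s > 0"
  proof (rule ccontr)
    assume "\<not> s > 0"
    then have "s*(ua*ub) \<le> 0" using uab by (simp add: mult_nonpos_nonneg)
    then show False using sp by simp
  qed
  have s32: "s \<ge> 32"
  proof (rule ccontr)
    assume "\<not> s \<ge> 32"
    have "s*(ua*ub) \<le> s*(1/4*(1/4))" using \<open>s>0\<close> uu by (intro mult_left_mono) auto
    then show False using sp \<open>\<not> s \<ge> 32\<close> by linarith
  qed
  define Dout where "Dout = ub*(1-ua)*pb + ua*(1-ub)*pa + ua*ub*eab"
  define Din where "Din = (1-ua)*(1-ub)*pl + ub*(1-ua)*elb + ua*(1-ub)*ela + ua*ub*elab"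
  have D1: "1 - Dout = (1-ua*pa)*(1-ub*pb)" unfolding Dout_def eab_def by (simp add: algebra_simps)
  have D2: "Din - Dout = pl*(1-Dout)" unfolding Dout_def Din_def eab_def ela_def elb_def elab_def
    by (simp add: algebra_simps)
  have "ua*pa \<le> 1/4*1" using mult_mono[of ua "1/4" pa 1] u p by simp
  moreover have "ub*pb \<le> 1/4*1" using mult_mono[of ub "1/4" pb 1] u p by simp
  ultimately have Dlt: "1 - Dout > 0" unfolding D1 by (intro mult_pos_pos) auto
  have "(1-pa)*(1-pb) \<le> 1" using p by (intro mult_le_one) auto
  then have eab0: "eab \<ge> 0" unfolding eab_def by simp
  have Dge: "Dout \<ge> 0" unfolding Dout_def using u p eab0
    by (intro add_nonneg_nonneg mult_nonneg_nonneg) auto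
  have elab1: "elab \<le> 1" unfolding elab_def using p by simp
  have Npos0: "N > 0" using \<open>s>0\<close> u unfolding s_def by (simp add: zero_less_mult_iff)
  have "N - s = N*(1-ul)" unfolding s_def by (simp add: algebra_simps)
  then have Npos: "N - s > 0" using Npos0 u by simp
  have OutE: "Out = (N - s)*Dout" unfolding Out_def Dout_def s_def by (simp add: algebra_simps)
  have InE: "In = s*Din - elab" unfolding In_def Din_def s_def by (simp add: algebra_simps)
  have spl: "s*pl \<ge> 32*(1/20)" using mult_mono[of 32 s "1/20" pl] s32 p by simp
  have key: "In - (s-1)*Dout > 0"
  proof -
    have "In - (s-1)*Dout = s*(Din - Dout) + Dout - elab" unfolding InE by (simp add: algebra_simps)
    also have "\<dots> = s*pl*(1-Dout) + Dout - elab" unfolding D2 by (simp add: mult.assoc)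
    finally have e: "In - (s-1)*Dout = s*pl*(1-Dout) + Dout - elab" .
    have "s*pl*(1-Dout) > 1*(1-Dout)" using spl Dlt by (intro mult_strict_right_mono) auto
    then show ?thesis unfolding e using elab1 by (smt (verit))
  qed
  have s1: "s - 1 > 0" using s32 by simp
  have q: "Out/(N-s) = Dout" using OutE Npos by simp
  have Inpos: "In/(s-1) > Dout" using key s1 by (simp add: field_simps)
  define X where "X = In/(s-1)"
  have X: "X > Dout" "X > 0" using Inpos Dge unfolding X_def by auto
  have "Dout/X < 1" using X by (simp add: divide_less_eq)
  moreover have "Dout/X \<ge> 0" using X Dge by simp
  ultimately show ?thesis unfolding q X_def[symmetric] by simp
qed


lemma ret_bound:
  fixes l a b :: nat
  assumes d: "l \<noteq> a" "l \<noteq> b" "a \<noteq> b"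
    and nc: "nc l \<ge> 4" "nc a \<ge> 4" "nc b \<ge> 4"
    and p: "1/20 \<le> p l" "p l \<le> 1" "1/20 \<le> p a" "p a \<le> 1" "1/20 \<le> p b" "p b \<le> 1"
    and n: "n \<ge> 2 * (nc l * nc a * nc b)"
  shows "0 \<le> retention {l,a,b} n nc p l \<and> retention {l,a,b} n nc p l < 1"
proof -
  define N where "N = real n"
  define ul where "ul = 1/real (nc l)"
  define ua where "ua = 1/real (nc a)"
  define ub where "ub = 1/real (nc b)"
  have ncp: "nc l > 0" "nc a > 0" "nc b > 0" using nc by auto
  have L1: "{l,a,b} = {l,b,a}" "{l,a,b} = {b,l,a}" "{l,a,b} = {a,l,b}" "{l,a,b} = {a,b,l}" by auto
  have S_l: "share_exact {l,a,b} n nc {l} = N*ul*(1-ua)*(1-ub)"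
    using SE1[of l a b nc n] d ncp unfolding N_def ul_def ua_def ub_def by simp
  have S_lb: "share_exact {l,a,b} n nc {l,b} = N*ul*ub*(1-ua)"
    using SE2[of l b a nc n] d ncp unfolding N_def ul_def ua_def ub_def L1(1)[symmetric] by simp
  have S_la: "share_exact {l,a,b} n nc {l,a} = N*ul*ua*(1-ub)"
    using SE2[of l a b nc n] d ncp unfolding N_def ul_def ua_def ub_def by simp
  have S_lab: "share_exact {l,a,b} n nc {l,a,b} = N*ul*ua*ub - 1"
    using SE3[of l a b nc n] d ncp unfolding N_def ul_def ua_def ub_def by simp
  have S_b: "share_exact {l,a,b} n nc {b} = N*ub*(1-ul)*(1-ua)"
    using SE1[of b l a nc n] d ncp unfolding N_def ul_def ua_def ub_def L1(2)[symmetric] by simp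
  have S_a: "share_exact {l,a,b} n nc {a} = N*ua*(1-ul)*(1-ub)"
    using SE1[of a l b nc n] d ncp unfolding N_def ul_def ua_def ub_def L1(3)[symmetric] by simp
  have S_ab: "share_exact {l,a,b} n nc {a,b} = N*ua*ub*(1-ul)"
    using SE2[of a b l nc n] d ncp unfolding N_def ul_def ua_def ub_def L1(4)[symmetric] by simp
  have s: "real n / real (nc l) = N*ul" unfolding N_def ul_def by simp
  define In where "In = N*ul*(1-ua)*(1-ub)*p l + N*ul*ub*(1-ua)*(1 - (1-p l)*(1-p b))
     + N*ul*ua*(1-ub)*(1 - (1-p l)*(1-p a)) + (N*ul*ua*ub - 1)*(1 - (1-p l)*((1-p a)*(1-p b)))"
  define Out where "Out = N*ub*(1-ul)*(1-ua)*p b + N*ua*(1-ul)*(1-ub)*p a + N*ua*ub*(1-ul)*(1 - (1-p a)*(1-p b))"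
  have I: "internal_weight {l,a,b} n nc p (\<lambda>_. 1) l = N*ul/2 * In"
    unfolding internal_weight_def sum_in[OF d] s S_l S_lb S_la S_lab In_def
    using d by (simp add: edge_prob_def)
  have O: "outgoing_weight {l,a,b} n nc p (\<lambda>_. 1) l = N*ul * Out"
    unfolding outgoing_weight_def sum_out[OF d] s S_b S_a S_ab Out_def
    using d by (simp add: edge_prob_def)
  have u: "0 < ul" "ul \<le> 1/4" "0 < ua" "ua \<le> 1/4" "0 < ub" "ub \<le> 1/4"
    unfolding ul_def ua_def ub_def using nc by (auto simp: field_simps)
  have Nb: "N*ul*ua*ub \<ge> 2"
  proof -
    have "real n \<ge> 2 * (real (nc l) * real (nc a) * real (nc b))" using n
      by (metis of_nat_le_iff of_nat_mult of_nat_numeral)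
    then show ?thesis unfolding N_def ul_def ua_def ub_def using ncp by (simp add: field_simps)
  qed
  have cq: "0 \<le> (Out/(N-N*ul))/(In/(N*ul-1)) \<and> (Out/(N-N*ul))/(In/(N*ul-1)) < 1"
    using core_q[OF u p Nb] unfolding In_def Out_def by simp
  have Spos: "N*ul > 0" using u Nb by (smt (verit) mult_nonneg_nonneg mult_nonpos_nonneg)
  have "retention {l,a,b} n nc p l = (Out/(N-N*ul))/(In/(N*ul-1))"
  proof -
    have alg: "((S*Q1)/(S*(M-S)))/((S/2*J)/(S*(S-1)/2)) = (Q1/(M-S))/(J/(S-1))" if "S > 0" for S Q1 M J :: real
    proof -
      have e1: "(S*Q1)/(S*(M-S)) = Q1/(M-S)" using that by simp
      have "(S/2*J)/(S*(S-1)/2) = (S*(J/2))/(S*((S-1)/2))" by simp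
      also have "\<dots> = (J/2)/((S-1)/2)" using that by simp
      also have "\<dots> = J/(S-1)" by simp
      finally show ?thesis unfolding e1 by simp
    qed
    have s': "N / real (nc l) = N*ul" unfolding ul_def by simp
    show ?thesis unfolding retention_def Let_def I O unfolding N_def[symmetric] s' by (rule alg[OF Spos])
  qed
  then show ?thesis using cq by simp
qed


lemma main3:
  fixes t m k :: nat
  assumes d: "t \<noteq> m" "t \<noteq> k" "m \<noteq> k"
    and nc: "nc t \<ge> 4" "nc m \<ge> 4" "nc k \<ge> 4"
    and p: "1/20 \<le> p t" "p t \<le> 1" "1/20 \<le> p m" "p m \<le> 1" "1/20 \<le> p k" "p k \<le> 1"
    and n: "n \<ge> 2 * (nc t * nc m * nc k)"
  shows "layer_modularity {t,m,k} n nc p (reduced_weight {t,m,k} n nc p ({t,m,k} - {t})) t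
         > layer_modularity {t,m,k} n nc p (\<lambda>_. 1) t"
proof -
  define qm where "qm = retention {t,m,k} n nc p m"
  define qk where "qk = retention {t,m,k} n nc p k"
  have L: "{t,m,k} = {m,t,k}" "{t,m,k} = {k,t,m}" "{t,m,k} = {t,k,m}" "{t,m,k} = {m,k,t}" by auto
  have qm: "0 \<le> qm" "qm < 1"
    using ret_bound[of m t k nc p n] d nc p n unfolding qm_def L(1)[symmetric] by (auto simp: mult_ac)
  have qk: "0 \<le> qk" "qk < 1"
    using ret_bound[of k t m nc p n] d nc p n unfolding qk_def L(2)[symmetric] by (auto simp: mult_ac)
  define N where "N = real n"
  define c where "c = 1/real (nc t)"
  define a where "a = 1/real (nc m)"
  define b where "b = 1/real (nc k)"
  have ncp: "nc t > 0" "nc m > 0" "nc k > 0" using nc by auto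
  have S_t: "share_exact {t,m,k} n nc {t} = N*c*(1-a)*(1-b)"
    using SE1[of t m k nc n] d ncp unfolding N_def c_def a_def b_def by simp
  have S_tk: "share_exact {t,m,k} n nc {t,k} = N*c*b*(1-a)"
    using SE2[of t k m nc n] d ncp unfolding N_def c_def a_def b_def L(3)[symmetric] by simp
  have S_tm: "share_exact {t,m,k} n nc {t,m} = N*c*a*(1-b)"
    using SE2[of t m k nc n] d ncp unfolding N_def c_def a_def b_def by simp
  have S_tmk: "share_exact {t,m,k} n nc {t,m,k} = N*c*a*b - 1"
    using SE3[of t m k nc n] d ncp unfolding N_def c_def a_def b_def by simp
  have S_k: "share_exact {t,m,k} n nc {k} = N*b*(1-c)*(1-a)"
    using SE1[of k t m nc n] d ncp unfolding N_def c_def a_def b_def L(2)[symmetric] by simp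
  have S_m: "share_exact {t,m,k} n nc {m} = N*a*(1-c)*(1-b)"
    using SE1[of m t k nc n] d ncp unfolding N_def c_def a_def b_def L(1)[symmetric] by simp
  have S_mk: "share_exact {t,m,k} n nc {m,k} = N*a*b*(1-c)"
    using SE2[of m k t nc n] d ncp unfolding N_def c_def a_def b_def L(4)[symmetric] by simp
  define pt where "pt = p t"
  define pm where "pm = p m"
  define pk where "pk = p k"
  define emk where "emk = 1 - (1-pm)*(1-pk)"
  define etm where "etm = 1 - (1-pt)*(1-pm)"
  define etk where "etk = 1 - (1-pt)*(1-pk)"
  define etmk where "etmk = 1 - (1-pt)*(1-pm)*(1-pk)"
  have E: "edge_prob p {t} = pt" "edge_prob p {k} = pk" "edge_prob p {m} = pm"
    "edge_prob p {t,k} = etk" "edge_prob p {t,m} = etm" "edge_prob p {m,k} = emk"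
    "edge_prob p {t,m,k} = etmk" "edge_prob p {} = 0"
    unfolding edge_prob_def pt_def pm_def pk_def etk_def etm_def emk_def etmk_def using d
    by (simp_all add: mult.assoc)
  have R: "{t,m,k} - {t} = {m,k}" using d by auto
  have W: "reduced_weight {t,m,k} n nc p ({t,m,k} - {t}) {t} = 1"
    "reduced_weight {t,m,k} n nc p ({t,m,k} - {t}) {t,k} = qk"
    "reduced_weight {t,m,k} n nc p ({t,m,k} - {t}) {t,m} = qm"
    "reduced_weight {t,m,k} n nc p ({t,m,k} - {t}) {t,m,k} = qm*qk"
    "reduced_weight {t,m,k} n nc p ({t,m,k} - {t}) {k} = qk"
    "reduced_weight {t,m,k} n nc p ({t,m,k} - {t}) {m} = qm"
    "reduced_weight {t,m,k} n nc p ({t,m,k} - {t}) {m,k} = qm*qk"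
    unfolding reduced_weight_def R qm_def qk_def using d by auto
  define xt where "xt = N*c*(1-a)*(1-b)*pt"
  define xm where "xm = N*(1-c)*a*(1-b)*pm"
  define xk where "xk = N*(1-c)*(1-a)*b*pk"
  define xmk where "xmk = N*(1-c)*a*b*emk"
  define xtm where "xtm = N*c*a*(1-b)*etm"
  define xtk where "xtk = N*c*(1-a)*b*etk"
  define xtmk where "xtmk = (N*c*a*b - 1)*etmk"
  define Bw where "Bw = xt + xtm*qm + xtk*qk + xtmk*(qm*qk)"
  define Cw where "Cw = xm*qm + xk*qk + xmk*(qm*qk)"
  define B1 where "B1 = xt + xtm + xtk + xtmk"
  define C1 where "C1 = xm + xk + xmk"
  let ?w = "reduced_weight {t,m,k} n nc p ({t,m,k} - {t})"
  have hBw: "(\<Sum>T\<in>{T. T \<subseteq> {t,m,k} \<and> t \<in> T}. share_exact {t,m,k} n nc T * edge_prob p T * ?w T) = Bw"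
    unfolding sum_in[OF d] S_t S_tk S_tm S_tmk E W Bw_def xt_def xtm_def xtk_def xtmk_def
    by (simp add: algebra_simps)
  have hCw: "(\<Sum>T\<in>{T. T \<subseteq> {t,m,k} \<and> t \<notin> T}. share_exact {t,m,k} n nc T * edge_prob p T * ?w T) = Cw"
    unfolding sum_out[OF d] S_k S_m S_mk E W Cw_def xm_def xk_def xmk_def
    by (simp add: algebra_simps)
  have hB1: "(\<Sum>T\<in>{T. T \<subseteq> {t,m,k} \<and> t \<in> T}. share_exact {t,m,k} n nc T * edge_prob p T * 1) = B1"
    unfolding sum_in[OF d] S_t S_tk S_tm S_tmk E B1_def xt_def xtm_def xtk_def xtmk_def
    by (simp add: algebra_simps)
  have hC1: "(\<Sum>T\<in>{T. T \<subseteq> {t,m,k} \<and> t \<notin> T}. share_exact {t,m,k} n nc T * edge_prob p T * 1) = C1"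
    unfolding sum_out[OF d] S_k S_m S_mk E C1_def xm_def xk_def xmk_def
    by (simp add: algebra_simps)
  have u: "0 < c" "c < 1" "0 < a" "a < 1" "0 < b" "b < 1"
    unfolding c_def a_def b_def using nc by (auto simp: field_simps)
  have pp: "0 < pt" "pt \<le> 1" "0 < pm" "pm \<le> 1" "0 < pk" "pk \<le> 1"
    unfolding pt_def pm_def pk_def using p by auto
  have Nb: "N*c*a*b \<ge> 2"
  proof -
    have "real n \<ge> 2 * (real (nc t) * real (nc m) * real (nc k))" using n
      by (metis of_nat_le_iff of_nat_mult of_nat_numeral)
    then show ?thesis unfolding N_def c_def a_def b_def using ncp by (simp add: field_simps)
  qed
  have "nc t * nc m * nc k > 0" using ncp by simp
  then have "n > 0" using n by linarith
  then have Npos: "N > 0" unfolding N_def by simp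
  have core: "Bw * C1 > B1 * Cw"
    unfolding Bw_def C1_def B1_def Cw_def xt_def xm_def xk_def xmk_def xtm_def xtk_def xtmk_def
      emk_def etm_def etk_def etmk_def
    by (rule core_main) (use u pp qm qk Nb in auto)
  have e0: "0 \<le> emk" "0 \<le> etm" "0 \<le> etk" "0 \<le> etmk"
    unfolding emk_def etm_def etk_def etmk_def using pp
    by (simp_all add: mult_le_one)
  have x0: "xt > 0" "xm \<ge> 0" "xk \<ge> 0" "xmk \<ge> 0" "xtm \<ge> 0" "xtk \<ge> 0" "xtmk \<ge> 0"
    unfolding xt_def xm_def xk_def xmk_def xtm_def xtk_def xtmk_def using u pp Npos e0 Nb by auto
  have pos: "Bw + Cw > 0" "B1 + C1 > 0" unfolding Bw_def Cw_def B1_def C1_def using x0 qm qk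
    by (simp_all add: add_pos_nonneg)
  have LMw: "layer_modularity {t,m,k} n nc p ?w t = Bw/(Bw+Cw) - 1/real (nc t)"
    using LM[where Ls="{t,m,k}" and nc=nc and t=t and n=n and p=p and w="?w"] hBw hCw pos ncp Npos unfolding N_def by simp
  have LM1: "layer_modularity {t,m,k} n nc p (\<lambda>_. 1) t = B1/(B1+C1) - 1/real (nc t)"
    using LM[where Ls="{t,m,k}" and nc=nc and t=t and n=n and p=p and w="\<lambda>_. 1"] hB1 hC1 pos ncp Npos unfolding N_def by simp
  have "B1*(Bw+Cw) < Bw*(B1+C1)" using core by (simp add: algebra_simps)
  then have "B1*(Bw+Cw)/((B1+C1)*(Bw+Cw)) < Bw*(B1+C1)/((B1+C1)*(Bw+Cw))"
    using pos by (intro divide_strict_right_mono) auto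
  then have "B1/(B1+C1) < Bw/(Bw+Cw)" using pos by simp
  then show ?thesis unfolding LMw LM1 by simp
qed

theorem theorem15:
  fixes n :: nat and nc :: "nat \<Rightarrow> nat" and p :: "nat \<Rightarrow> real" and t :: nat
  assumes "\<forall>l<3. nc l \<ge> 4"
    and "\<forall>l<3. 0.05 \<le> p l \<and> p l \<le> 1"
    and "n \<ge> 2 * (\<Prod>l<3. nc l)"
    and "t < 3"
  shows "layer_modularity {..<3} n nc p (reduced_weight {..<3} n nc p ({..<3} - {t})) t
         > layer_modularity {..<3} n nc p (\<lambda>_. 1) t"
proof -
  have nc: "nc 0 \<ge> 4" "nc 1 \<ge> 4" "nc 2 \<ge> 4" using assms(1) by auto
  have p0: "0.05 \<le> p 0 \<and> p 0 \<le> 1" "0.05 \<le> p 1 \<and> p 1 \<le> 1" "0.05 \<le> p 2 \<and> p 2 \<le> 1"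
    using assms(2) by auto
  have p: "1/20 \<le> p 0" "p 0 \<le> 1" "1/20 \<le> p 1" "p 1 \<le> 1" "1/20 \<le> p 2" "p 2 \<le> 1"
    using p0 by auto
  have U: "{..<3::nat} = {0,1,2}" by auto
  have n: "n \<ge> 2 * (nc 0 * nc 1 * nc 2)" using assms(3) unfolding U by (simp add: mult_ac)
  have "t = 0 \<or> t = 1 \<or> t = 2" using assms(4) by auto
  then show ?thesis
  proof (elim disjE)
    assume t: "t = 0"
    show ?thesis unfolding t U using main3[of 0 1 2 nc p n] nc p n by simp
  next
    assume t: "t = 1"
    have U1: "{..<3::nat} = {1,0,2}" by auto
    show ?thesis unfolding t U1 using main3[of 1 0 2 nc p n] nc p n by (simp add: mult_ac)
  next
    assume t: "t = 2"
    have U2: "{..<3::nat} = {2,0,1}" by auto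
    show ?thesis unfolding t U2 using main3[of 2 0 1 nc p n] nc p n by (simp add: mult_ac)
  qed
qed

end
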